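(* Let $n\ge2$ and let $\phi_1(x),\dots,\phi_n(x)$ be functions of $x$. Let $J=J_{n+1}$ be the $(n+1)\times(n+1)$ matrix, with rows and columns indexed $0,\dots,n$, whose only nonzero entries are $J_{k,n-k}=(-1)^k$ (so $XJY^T=\sum_{k=0}^n(-1)^kx_ky_{n-k}$). For $0\le i\le n$ define the vector of $n+1$ functions $$\delta_i\tilde F(x)=(\underbrace{0,\dots,0}_{i},1,\mathcal I(i+1),\mathcal I(i+1,i+2),\dots,\mathcal I(i+1,i+2,\dots,n)),$$ so $\delta_0\tilde F=\tilde F=(1,\mathcal I(1),\mathcal I(1,2),\dots,\mathcal I(1,\dots,n))$. Let $s(a)=n+1-a$ for $1\le a\le n$, and let $s$ act on iterated integrals by $s\,\mathcal I(a_1\cdots a_m)=\mathcal I(s(a_1)\cdots s(a_m))$ and componentwise on vectors of iterated integrals (fixing constants). Then for $0\le i,j\le n$, $$(\delta_i\tilde F)J(s\delta_j\tilde F)^T=0\ \text{ if } i+j\ne n,\qquad (\delta_i\tilde F)J(s\delta_j\tilde F)^T=(-1)^i\ \text{ if } i+j=n.$$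
   Context: Iterated integrals: $\mathcal I(a_1\cdots a_k)(x)=\int_0^x\phi_{a_1}(x_1)\,dx_1\int_0^{x_1}\phi_{a_2}(x_2)\,dx_2\cdots\int_0^{x_{k-1}}\phi_{a_k}(x_k)\,dx_k$ with $\mathcal I(\varnothing)=1$. *)

theory Defs
  imports "HOL-Analysis.Analysis"
begin

definition oint :: "real \<Rightarrow> (real \<Rightarrow> real) \<Rightarrow> real" where
  "oint x f = (if 0 \<le> x then integral {0..x} f else - integral {x..0} f)"

fun iter_int :: "(nat \<Rightarrow> real \<Rightarrow> real) \<Rightarrow> nat list \<Rightarrow> real \<Rightarrow> real" where
  "iter_int \<phi> [] x = 1"
| "iter_int \<phi> (a # as) x = oint x (\<lambda>t. \<phi> a t * iter_int \<phi> as t)"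

definition deltaF :: "(nat \<Rightarrow> real \<Rightarrow> real) \<Rightarrow> nat \<Rightarrow> nat \<Rightarrow> real \<Rightarrow> real" where
  "deltaF \<phi> i k x = (if k < i then 0 else iter_int \<phi> [i+1..<k+1] x)"

definition s_letter :: "nat \<Rightarrow> nat \<Rightarrow> nat" where
  "s_letter n a = n + 1 - a"

definition s_deltaF :: "(nat \<Rightarrow> real \<Rightarrow> real) \<Rightarrow> nat \<Rightarrow> nat \<Rightarrow> nat \<Rightarrow> real \<Rightarrow> real" where
  "s_deltaF \<phi> n j k x = (if k < j then 0 else iter_int \<phi> (map (s_letter n) [j+1..<k+1]) x)"

definition Jmat :: "nat \<Rightarrow> nat \<Rightarrow> nat \<Rightarrow> real" where
  "Jmat n k l = (if k + l = n then (-1) ^ k else 0)"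

definition bilin :: "nat \<Rightarrow> (nat \<Rightarrow> real) \<Rightarrow> (nat \<Rightarrow> real) \<Rightarrow> real" where
  "bilin n X Y = (\<Sum>k\<in>{0..n}. \<Sum>l\<in>{0..n}. X k * Jmat n k l * Y l)"

end

theory Submission
  imports Defs
begin

lemma oint_deriv:
  fixes f :: "real \<Rightarrow> real"
  assumes cf: "continuous_on UNIV f"
  shows "((\<lambda>y. oint y f) has_real_derivative f x) (at x)"
proof -
  define a where "a = min x 0 - 1"
  define b where "b = max x 0 + 1"
  have ab: "a \<le> 0" "0 \<le> b" "a < x" "x < b" by (auto simp: a_def b_def)
  have int: "f integrable_on {c..d}" for c d
    by (rule integrable_continuous_real) (rule continuous_on_subset[OF cf], auto)
  have eq: "integral {a..y} f - integral {a..0} f = oint y f" if "y \<in> {a<..<b}" for y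
  proof (cases "0 \<le> y")
    case True
    have "integral {a..0} f + integral {0..y} f = integral {a..y} f"
      by (rule Henstock_Kurzweil_Integration.integral_combine) (use True ab int in auto)
    then show ?thesis using True by (auto simp: oint_def)
  next
    case False
    have "integral {a..y} f + integral {y..0} f = integral {a..0} f"
      by (rule Henstock_Kurzweil_Integration.integral_combine) (use False ab int that in auto)
    then show ?thesis using False by (auto simp: oint_def)
  qed
  have "((\<lambda>y. integral {a..y} f) has_real_derivative f x) (at x within {a..b})"
    by (rule integral_has_real_derivative) (auto intro: continuous_on_subset[OF cf] simp: ab less_imp_le)
  then have "((\<lambda>y. integral {a..y} f) has_real_derivative f x) (at x within {a<..<b})"
    by (rule DERIV_subset) auto
  then have "((\<lambda>y. integral {a..y} f) has_real_derivative f x) (at x)"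
    using ab by (metis at_within_open greaterThanLessThan_iff open_greaterThanLessThan)
  then have "((\<lambda>y. integral {a..y} f - integral {a..0} f) has_real_derivative f x) (at x)"
    by (auto intro!: derivative_eq_intros)
  then show ?thesis
    by (rule has_field_derivative_transform_within_open[where S="{a<..<b}"]) (use ab eq in auto)
qed

lemma iter_cont:
  "(\<forall>b\<in>set w. continuous_on UNIV (\<phi> b)) \<Longrightarrow> continuous_on UNIV (iter_int \<phi> w)"
proof (induction w)
  case Nil
  then show ?case by simp
next
  case (Cons a as)
  have c: "continuous_on UNIV (\<lambda>t. \<phi> a t * iter_int \<phi> as t)"
    using Cons by (auto intro!: continuous_intros)
  have "\<And>x. isCont (iter_int \<phi> (a # as)) x"
  proof -
    fix x
    have "((\<lambda>y. oint y (\<lambda>t. \<phi> a t * iter_int \<phi> as t)) has_real_derivative \<phi> a x * iter_int \<phi> as x) (at x)"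
      by (rule oint_deriv[OF c])
    then have "isCont (\<lambda>y. oint y (\<lambda>t. \<phi> a t * iter_int \<phi> as t)) x"
      by (rule DERIV_isCont)
    moreover have "(\<lambda>y. oint y (\<lambda>t. \<phi> a t * iter_int \<phi> as t)) = iter_int \<phi> (a # as)"
      by (rule ext) simp
    ultimately show "isCont (iter_int \<phi> (a # as)) x" by simp
  qed
  then show ?case by (intro continuous_at_imp_continuous_on ballI)
qed

definition dI :: "(nat \<Rightarrow> real \<Rightarrow> real) \<Rightarrow> nat list \<Rightarrow> real \<Rightarrow> real" where
  "dI \<phi> w x = (case w of [] \<Rightarrow> 0 | a # as \<Rightarrow> \<phi> a x * iter_int \<phi> as x)"

lemma dI_deriv:
  assumes "\<forall>b\<in>set w. continuous_on UNIV (\<phi> b)"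
  shows "(iter_int \<phi> w has_real_derivative dI \<phi> w x) (at x)"
proof (cases w)
  case Nil
  have "iter_int \<phi> [] = (\<lambda>_. 1)" by (rule ext) simp
  then show ?thesis using Nil by (simp add: dI_def)
next
  case (Cons a as)
  have c: "continuous_on UNIV (\<lambda>t. \<phi> a t * iter_int \<phi> as t)"
    using assms Cons by (auto intro!: continuous_intros iter_cont)
  have "((\<lambda>y. oint y (\<lambda>t. \<phi> a t * iter_int \<phi> as t)) has_real_derivative \<phi> a x * iter_int \<phi> as x) (at x)"
    by (rule oint_deriv[OF c])
  moreover have "(\<lambda>y. oint y (\<lambda>t. \<phi> a t * iter_int \<phi> as t)) = iter_int \<phi> (a # as)"
    by (rule ext) simp
  ultimately show ?thesis using Cons by (simp add: dI_def)
qed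

lemma iter0: "w \<noteq> [] \<Longrightarrow> iter_int \<phi> w 0 = 0"
  by (cases w) (auto simp: oint_def)

definition S :: "(nat \<Rightarrow> real \<Rightarrow> real) \<Rightarrow> nat list \<Rightarrow> real \<Rightarrow> real" where
  "S \<phi> w x = (\<Sum>k\<le>length w. (-1)^k * iter_int \<phi> (take k w) x * iter_int \<phi> (rev (drop k w)) x)"

lemma S_at0: "w \<noteq> [] \<Longrightarrow> S \<phi> w 0 = 0"
  unfolding S_def
proof (rule sum.neutral, rule ballI)
  fix k assume w: "w \<noteq> []" and k: "k \<in> {..length w}"
  show "(-1)^k * iter_int \<phi> (take k w) 0 * iter_int \<phi> (rev (drop k w)) 0 = 0"
  proof (cases k)
    case 0
    then show ?thesis using w by (simp add: iter0)
  next
    case (Suc m)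
    then have "take k w \<noteq> []" using w by simp
    then show ?thesis by (simp add: iter0)
  qed
qed

lemma S_deriv:
  assumes "\<forall>b\<in>set w. continuous_on UNIV (\<phi> b)"
  shows "(S \<phi> w has_real_derivative (\<Sum>k\<le>length w. (-1)^k * (dI \<phi> (take k w) x * iter_int \<phi> (rev (drop k w)) x)) + (\<Sum>k\<le>length w. (-1)^k * (iter_int \<phi> (take k w) x * dI \<phi> (rev (drop k w)) x))) (at x)"
proof -
  have eqS: "S \<phi> w = (\<lambda>x. \<Sum>k\<le>length w. (-1)^k * iter_int \<phi> (take k w) x * iter_int \<phi> (rev (drop k w)) x)"
    by (rule ext) (simp add: S_def)
  have t: "\<forall>b\<in>set (take k w). continuous_on UNIV (\<phi> b)" for k
    using assms by (meson in_set_takeD)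
  have d: "\<forall>b\<in>set (rev (drop k w)). continuous_on UNIV (\<phi> b)" for k
    using assms by (metis in_set_dropD set_rev)
  have "((\<lambda>x. \<Sum>k\<le>length w. (-1)^k * iter_int \<phi> (take k w) x * iter_int \<phi> (rev (drop k w)) x) has_real_derivative (\<Sum>k\<le>length w. (-1)^k * (dI \<phi> (take k w) x * iter_int \<phi> (rev (drop k w)) x + iter_int \<phi> (take k w) x * dI \<phi> (rev (drop k w)) x))) (at x)"
  proof (rule DERIV_sum)
    fix k
    have "((\<lambda>x. iter_int \<phi> (take k w) x * iter_int \<phi> (rev (drop k w)) x) has_real_derivative
       (dI \<phi> (take k w) x * iter_int \<phi> (rev (drop k w)) x + iter_int \<phi> (take k w) x * dI \<phi> (rev (drop k w)) x)) (at x)"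
      using DERIV_mult[OF dI_deriv[OF t] dI_deriv[OF d]] by (simp add: algebra_simps)
    from DERIV_cmult[OF this, of "(-1)^k"]
    show "((\<lambda>x. (-1)^k * iter_int \<phi> (take k w) x * iter_int \<phi> (rev (drop k w)) x) has_real_derivative
       (-1)^k * (dI \<phi> (take k w) x * iter_int \<phi> (rev (drop k w)) x + iter_int \<phi> (take k w) x * dI \<phi> (rev (drop k w)) x)) (at x)"
      by (simp add: mult.assoc)
  qed
  then show ?thesis unfolding eqS by (simp add: algebra_simps sum.distrib)
qed

lemma P1:
  "(\<Sum>k\<le>length (a # v). (-1)^k * (dI \<phi> (take k (a # v)) x * iter_int \<phi> (rev (drop k (a # v))) x))
    = - (\<phi> a x * S \<phi> v x)"
  unfolding S_def
  by (simp add: sum.atMost_Suc_shift dI_def sum_distrib_left sum_negf algebra_simps del: sum.atMost_Suc)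

lemma P2:
  "(\<Sum>k\<le>length (u @ [b]). (-1)^k * (iter_int \<phi> (take k (u @ [b])) x * dI \<phi> (rev (drop k (u @ [b]))) x))
    = \<phi> b x * S \<phi> u x"
proof -
  have "(\<Sum>k\<le>length (u @ [b]). (-1)^k * (iter_int \<phi> (take k (u @ [b])) x * dI \<phi> (rev (drop k (u @ [b]))) x))
     = (\<Sum>k\<le>length u. (-1)^k * (iter_int \<phi> (take k (u @ [b])) x * dI \<phi> (rev (drop k (u @ [b]))) x))"
    by (simp add: dI_def)
  also have "\<dots> = (\<Sum>k\<le>length u. \<phi> b x * ((-1)^k * iter_int \<phi> (take k u) x * iter_int \<phi> (rev (drop k u)) x))"
    by (rule sum.cong) (auto simp: dI_def)
  also have "\<dots> = \<phi> b x * S \<phi> u x"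
    by (simp add: S_def sum_distrib_left)
  finally show ?thesis .
qed

lemma S_zero:
  "w \<noteq> [] \<Longrightarrow> (\<forall>b\<in>set w. continuous_on UNIV (\<phi> b)) \<Longrightarrow> S \<phi> w x = 0"
proof (induction "length w" arbitrary: w x rule: less_induct)
  case less
  obtain a v where av: "w = a # v" using less.prems by (cases w) auto
  obtain u b where ub: "w = u @ [b]" using less.prems by (cases w rule: rev_exhaust) auto
  have D: "\<phi> b y * S \<phi> u y - \<phi> a y * S \<phi> v y = 0" for y
  proof (cases "v = []")
    case True
    then have "u = []" "a = b" using av ub by (auto simp: Cons_eq_append_conv)
    then show ?thesis using True by (simp add: S_def)
  next
    case False
    then have "u \<noteq> []" using av ub by (cases u) auto
    have "S \<phi> v y = 0"
      using less.hyps[of v y] False less.prems av by auto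
    moreover have "S \<phi> u y = 0"
      using less.hyps[of u y] \<open>u \<noteq> []\<close> less.prems ub by auto
    ultimately show ?thesis by simp
  qed
  have "\<forall>y. (S \<phi> w has_real_derivative 0) (at y)"
  proof
    fix y
    have "(S \<phi> w has_real_derivative (- (\<phi> a y * S \<phi> v y)) + \<phi> b y * S \<phi> u y) (at y)"
      using S_deriv[OF less.prems(2), of y] P1[of \<phi> a v y] P2[of \<phi> u b y] av ub by metis
    then show "(S \<phi> w has_real_derivative 0) (at y)" using D[of y] by simp
  qed
  then have "S \<phi> w x = S \<phi> w 0" by (rule DERIV_isconst_all)
  then show ?case using S_at0[OF less.prems(1)] by simp
qed

lemma map_s_rev:
  assumes "k + j \<le> n"
  shows "map (s_letter n) [j+1..<n-k+1] = rev [k+1..<n-j+1]"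
proof (rule nth_equalityI)
  show "length (map (s_letter n) [j+1..<n-k+1]) = length (rev [k+1..<n-j+1])" using assms by (auto simp: add.commute)
next
  fix p assume "p < length (map (s_letter n) [j+1..<n-k+1])"
  then have p: "p < n - k - j" using assms by (simp del: upt_Suc)
  then show "map (s_letter n) [j+1..<n-k+1] ! p = rev [k+1..<n-j+1] ! p"
    using assms by (simp add: rev_nth s_letter_def del: upt_Suc)
qed

lemma bilin_eq:
  "bilin n X Y = (\<Sum>k\<in>{0..n}. (-1)^k * X k * Y (n-k))"
  unfolding bilin_def
proof (rule sum.cong[OF refl])
  fix k assume k: "k \<in> {0..n}"
  have "(\<Sum>l\<in>{0..n}. X k * Jmat n k l * Y l) = (\<Sum>l\<in>{0..n}. if l = n - k then (-1)^k * X k * Y (n-k) else 0)"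
    by (rule sum.cong[OF refl]) (use k in \<open>auto simp: Jmat_def\<close>)
  also have "\<dots> = (-1)^k * X k * Y (n-k)" by simp
  finally show "(\<Sum>l\<in>{0..n}. X k * Jmat n k l * Y l) = (-1)^k * X k * Y (n-k)" .
qed

theorem proposition5p5:
  fixes \<phi> :: "nat \<Rightarrow> real \<Rightarrow> real" and n i j :: nat and x :: real
  assumes "n \<ge> 2"
    and "\<And>a. a \<in> {1..n} \<Longrightarrow> continuous_on UNIV (\<phi> a)"
    and "i \<le> n" and "j \<le> n"
  shows "bilin n (\<lambda>k. deltaF \<phi> i k x) (\<lambda>k. s_deltaF \<phi> n j k x)
           = (if i + j = n then (-1) ^ i else 0)"
proof -
  define g where "g k = (-1)^k * deltaF \<phi> i k x * s_deltaF \<phi> n j (n-k) x" for k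
  have B: "bilin n (\<lambda>k. deltaF \<phi> i k x) (\<lambda>k. s_deltaF \<phi> n j k x) = (\<Sum>k\<in>{0..n}. g k)"
    by (simp add: bilin_eq g_def)
  show ?thesis
  proof (cases "n \<le> i + j")
    case True
    have "(\<Sum>k\<in>{0..n}. g k) = (\<Sum>k\<in>{0..n}. if k = i then (if i + j = n then (-1) ^ i else 0) else 0)"
      by (rule sum.cong[OF refl]) (use True assms in \<open>auto simp: g_def deltaF_def s_deltaF_def\<close>)
    also have "\<dots> = (if i + j = n then (-1) ^ i else 0)" using assms by simp
    finally show ?thesis using B by simp
  next
    case False
    define m where "m = n - j"
    have im: "i < m" "m \<le> n" using False assms by (auto simp: m_def)
    define w where "w = [i+1..<m+1]"
    have wne: "w \<noteq> []" using im by (simp add: w_def)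
    have wc: "\<forall>b\<in>set w. continuous_on UNIV (\<phi> b)" using im assms(2) by (auto simp: w_def)
    have "(\<Sum>k\<in>{0..n}. g k) = (\<Sum>k\<in>{i..m}. g k)"
      by (rule sum.mono_neutral_right) (use im in \<open>auto simp: g_def deltaF_def s_deltaF_def m_def\<close>)
    also have "\<dots> = (\<Sum>t\<in>{0..m-i}. g (t + i))"
      using sum.shift_bounds_cl_nat_ivl[of g 0 i "m-i"] im by simp
    also have "\<dots> = (\<Sum>t\<le>length w. (-1)^i * ((-1)^t * iter_int \<phi> (take t w) x * iter_int \<phi> (rev (drop t w)) x))"
    proof (rule sum.cong)
      show "{0..m-i} = {..length w}" by (auto simp: w_def)
    next
      fix t assume t: "t \<in> {..length w}"
      then have t': "t + i \<le> m" using im by (simp add: w_def)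
      have tk: "take t w = [i+1..<t+i+1]" unfolding w_def by (subst take_upt) (use t' in \<open>auto simp: ac_simps\<close>)
      have dr: "rev (drop t w) = map (s_letter n) [j+1..<n-(t+i)+1]"
        using map_s_rev[of "t+i" j n] t' im by (simp add: w_def m_def add.commute)
      show "g (t + i) = (-1)^i * ((-1)^t * iter_int \<phi> (take t w) x * iter_int \<phi> (rev (drop t w)) x)"
        unfolding tk dr using t' im by (simp add: g_def deltaF_def s_deltaF_def m_def power_add)
    qed
    also have "\<dots> = (-1)^i * S \<phi> w x" by (simp add: S_def sum_distrib_left)
    also have "\<dots> = 0" using S_zero[OF wne wc] by simp
    finally show ?thesis using B False by simp
  qed
qed

end
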